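(* Let $K$ be a field of characteristic zero, let $u,v,\ell\in K[X]$ be of degree one, and let $F=u\circ X^d\circ v$ where $d>1$. The following are equivalent: (1) the equation $F\circ\ell\circ F\circ b=a\circ F\circ F$ has infinitely many solutions in degree-one polynomials $a,b\in K[X]$; (2) $F=v^{-1}\circ\epsilon X^d\circ v$ and $\ell=v^{-1}\circ\delta X\circ v$ for some $\epsilon,\delta\in K^*$.
   Context: $\circ$ denotes composition of polynomials; $v^{-1}$ is the compositional inverse of $v$. *)

theory Defs
  imports "HOL-Computational_Algebra.Polynomial"
begin

definition comp_inv :: "'a::field poly \<Rightarrow> 'a poly" where
  "comp_inv v = [:- coeff v 0 / coeff v 1, 1 / coeff v 1:]"

end

theory Submission
  imports Defs
begin


lemma deg_pow_const:
  fixes A :: "'a::comm_ring_1 poly"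
  shows "degree ((A + [:c:])^n - A^n) \<le> (n - 1) * degree A"
proof (induction n)
  case 0 then show ?case by simp
next
  case (Suc n)
  show ?case
  proof (cases "n = 0")
    case True then show ?thesis by simp
  next
    case False
    have e: "(A + [:c:])^Suc n - A^Suc n = (A + [:c:]) * ((A + [:c:])^n - A^n) + [:c:] * A^n"
      by (simp add: algebra_simps)
    have d1: "degree (A + [:c:]) \<le> degree A"
      by (metis degree_add_le degree_pCons_0 le_zero_eq linorder_le_cases zero_le)
    have "degree ((A + [:c:]) * ((A + [:c:])^n - A^n)) \<le> degree A + (n - 1) * degree A"
      by (meson Suc.IH add_le_mono d1 degree_mult_le order_trans)
    also have "\<dots> = n * degree A" using False by (cases n) auto
    finally have a: "degree ((A + [:c:]) * ((A + [:c:])^n - A^n)) \<le> n * degree A" .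
    have b: "degree ([:c:] * A^n) \<le> n * degree A"
    proof -
      have "[:c:] * A^n = smult c (A^n)" by simp
      then show ?thesis using degree_smult_le[of c "A^n"] degree_power_le[of A n] by (simp add: mult.commute)
    qed
    show ?thesis unfolding e using a b
      by (rule order_trans[OF degree_add_le]) (use a b in auto)
  qed
qed

lemma coeff_pow_const:
  fixes A :: "'a::comm_ring_1 poly"
  assumes "(n - 1) * degree A < k"
  shows "coeff ((A + [:c:])^n) k = coeff (A^n) k"
proof -
  have "coeff ((A + [:c:])^n - A^n) k = 0"
    using deg_pow_const[of A c n] assms by (intro coeff_eq_0) linarith
  then show ?thesis by simp
qed



lemma lin_coeffs:
  fixes q p :: "'a::comm_ring_1"
  shows "coeff ([:q,p:]^Suc m) (Suc m) = p^Suc m"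
    and "coeff ([:q,p:]^Suc m) m = of_nat (Suc m) * p^m * q"
  using coeff_linear_poly_power[of "Suc m" "Suc m" q p] coeff_linear_poly_power[of m "Suc m" q p]
  by simp_all

lemma core:
  fixes u0 u1 a0 a1 al be ga et q p :: "'a::field_char_0" and d :: nat
  assumes nz: "u1 \<noteq> 0" "a1 \<noteq> 0" "al \<noteq> 0" "ga \<noteq> 0" "p \<noteq> 0" and d: "d > 1"
  and H: "\<And>y. u0 + u1*(be + al*(q+p*y)^d)^d = a0 + a1*u0 + a1*u1*(et + ga*y^d)^d"
  shows "q = 0 \<and> be*ga = al*p^d*et"
proof -
  define A where "A = smult al ([:q,p:]^d)"
  define B where "B = monom ga d"
  define P1 where "P1 = [:u0:] + smult u1 ((A + [:be:])^d)"
  define P2 where "P2 = [:a0 + a1*u0:] + smult (a1*u1) ((B + [:et:])^d)"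
  have "poly P1 = poly P2"
  proof
    fix y show "poly P1 y = poly P2 y"
      using H[of y] by (simp add: P1_def P2_def A_def B_def poly_monom algebra_simps)
  qed
  then have P12: "P1 = P2" by (simp add: poly_eq_poly_eq_iff)
  obtain M where M: "d * d = Suc M" using d by (cases "d*d") auto
  have dA: "degree A \<le> d"
    unfolding A_def using degree_smult_le degree_power_le[of "[:q,p:]" d]
    by (metis (no_types, lifting) degree_pCons_le le_trans mult.commute mult_1 degree_pCons_0 
        mult_le_mono2 One_nat_def)
  have "(d - 1) * d + d = d * d" using d by (cases d) auto
  then have ltd: "(d - 1) * d < M" using M d by linarith
  have M0: "\<And>c. coeff [:c:] M = 0" using ltd by (cases M) auto
  have lt: "(d - 1) * degree A < M"
  proof -
    have "(d - 1) * degree A \<le> (d - 1) * d" using dA by simp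
    then show ?thesis using ltd by linarith
  qed
  have lt2: "(d - 1) * degree B < M"
    using ltd by (simp add: B_def degree_monom_eq nz)
  have c1: "coeff P1 M = u1 * al^d * (of_nat (Suc M) * p^M * q)"
  proof -
    have "coeff P1 M = u1 * coeff (A^d) M"
      using coeff_pow_const[OF lt] M M0 by (simp add: P1_def)
    also have "A^d = smult (al^d) ([:q,p:]^(Suc M))"
      by (simp add: A_def smult_power power_mult[symmetric] M)
    finally show ?thesis using lin_coeffs(2)[of q p M] by simp
  qed
  have c2: "coeff P2 M = 0"
  proof -
    have "coeff P2 M = a1*u1 * coeff (B^d) M"
      using coeff_pow_const[OF lt2] M M0 by (simp add: P2_def)
    also have "B^d = monom (ga^d) (Suc M)"
      by (simp add: B_def monom_power M)
    finally show ?thesis by simp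
  qed
  have q0: "q = 0" using c1 c2 P12 nz of_nat_neq_0[of M, where ?'a='a] by simp
  obtain m where m: "d = Suc m" and m1: "m \<ge> 1" using d by (cases d) auto
  define c where "c = al*p^d"
  have cnz: "c \<noteq> 0" using nz by (simp add: c_def)
  define Q1 where "Q1 = [:u0:] + smult u1 ([:be, c:]^d)"
  define Q2 where "Q2 = [:a0 + a1*u0:] + smult (a1*u1) ([:et,ga:]^d)"
  have "poly (pcompose (Q1 - Q2) (monom 1 d)) = poly 0"
  proof
    fix y show "poly (pcompose (Q1 - Q2) (monom 1 d)) y = poly 0 y"
      using H[of y] q0 by (simp add: Q1_def Q2_def c_def poly_pcompose poly_monom algebra_simps
          power_mult_distrib)
  qed
  then have "pcompose (Q1 - Q2) (monom 1 d) = 0" by (simp add: poly_eq_poly_eq_iff)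
  then have "Q1 - Q2 = 0"
  proof (rule pcompose_eq_0)
    show "0 < degree (monom (1::'a) d)" using d by (simp add: degree_monom_eq)
  qed
  then have Q12: "Q1 = Q2" by simp
  have e1: "coeff Q1 d = coeff Q2 d" and e2: "coeff Q1 m = coeff Q2 m" using Q12 by simp_all
  have k1: "coeff ([:be,c:]^d) d = c^d" unfolding m by (rule lin_coeffs(1))
  have k2: "coeff ([:et,ga:]^d) d = ga^d" unfolding m by (rule lin_coeffs(1))
  have k3: "coeff ([:be,c:]^d) m = of_nat d * c^m * be" unfolding m by (rule lin_coeffs(2))
  have k4: "coeff ([:et,ga:]^d) m = of_nat d * ga^m * et" unfolding m by (rule lin_coeffs(2))
  have z1: "\<And>x. coeff [:x:] d = 0" using m by simp
  have z2: "\<And>x. coeff [:x:] m = 0" using m1 by (cases m) auto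
  have f1: "u1 * c^d = a1*u1*ga^d"
    using e1 k1 k2 by (simp add: Q1_def Q2_def z1)
  have f2: "u1 * (of_nat d * c^m * be) = a1*u1*(of_nat d * ga^m * et)"
    using e2 k3 k4 by (simp add: Q1_def Q2_def z2)
  have g1: "c^d = a1*ga^d" using f1 nz by simp
  have g2: "c^m * be = a1*ga^m*et" using f2 nz m of_nat_neq_0[of m, where ?'a='a] by (simp add: mult.assoc)
  have "c^d * (be*ga) = c^d * (c*et)"
  proof -
    have "c^d * (be*ga) = c * (c^m*be) * ga" using m by (simp add: algebra_simps)
    also have "\<dots> = c * (a1*ga^m*et) * ga" using g2 by simp
    also have "\<dots> = (a1 * ga^d) * (c*et)" using m by (simp add: algebra_simps)
    also have "\<dots> = c^d * (c*et)" using g1 by simp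
    finally show ?thesis .
  qed
  then have "be*ga = c*et" using cnz by simp
  then show ?thesis using q0 by (simp add: c_def)
qed



lemma eval_L:
  fixes u0 u1 v0 v1 l0 l1 b0 b1 x :: "'a::field_char_0" and d::nat
  assumes "v1 \<noteq> 0"
  shows "poly (pcompose (pcompose [:u0,u1:] (pcompose (monom 1 d) [:v0,v1:]))
     (pcompose [:l0,l1:] (pcompose (pcompose [:u0,u1:] (pcompose (monom 1 d) [:v0,v1:])) [:b0,b1:]))) x
   = u0 + u1 * ((v0 + v1*l0 + v1*l1*u0) + (v1*l1*u1) * ((v0 + v1*b0 - b1*v0) + b1*(v0+v1*x))^d)^d"
proof -
  have z: "v0 + v1*(b0+b1*x) = (v0 + v1*b0 - b1*v0) + b1*(v0+v1*x)" by (simp add: algebra_simps)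
  have w: "\<And>Z. v0 + v1*(l0 + l1*(u0 + u1*Z)) = (v0 + v1*l0 + v1*l1*u0) + (v1*l1*u1) * Z"
    by (simp add: algebra_simps)
  have h: "poly (pcompose (pcompose [:u0,u1:] (pcompose (monom 1 d) [:v0,v1:]))
     (pcompose [:l0,l1:] (pcompose (pcompose [:u0,u1:] (pcompose (monom 1 d) [:v0,v1:])) [:b0,b1:]))) x
     = u0 + u1 * (v0 + v1*(l0 + l1*(u0 + u1*(v0+v1*(b0+b1*x))^d)))^d"
    by (simp add: poly_pcompose poly_monom algebra_simps)
  show ?thesis unfolding h w z ..
qed

lemma eval_R:
  fixes u0 u1 v0 v1 a0 a1 x :: "'a::field_char_0" and d::nat
  shows "poly (pcompose [:a0,a1:] (pcompose (pcompose [:u0,u1:] (pcompose (monom 1 d) [:v0,v1:]))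
     (pcompose [:u0,u1:] (pcompose (monom 1 d) [:v0,v1:])))) x
   = a0 + a1*u0 + a1*u1*((v0 + v1*u0) + (v1*u1)*(v0+v1*x)^d)^d"
proof -
  have w: "\<And>Z. v0 + v1*(u0 + u1*Z) = (v0 + v1*u0) + (v1*u1) * Z"
    by (simp add: algebra_simps)
  show ?thesis by (simp add: poly_pcompose poly_monom w algebra_simps)
qed



lemma lin_rep:
  fixes p :: "'a::field poly"
  assumes "degree p = 1"
  shows "p = [:coeff p 0, coeff p 1:]" "coeff p 1 \<noteq> 0"
proof -
  show "p = [:coeff p 0, coeff p 1:]"
  proof (rule poly_eqI)
    fix n show "coeff p n = coeff [:coeff p 0, coeff p 1:] n"
    proof (cases n)
      case (Suc k) then show ?thesis using assms by (cases k) (auto intro: coeff_eq_0)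
    qed simp
  qed
  show "coeff p 1 \<noteq> 0" using assms leading_coeff_0_iff[of p] by auto
qed

lemma eqchar:
  fixes u0 u1 v0 v1 l0 l1 a0 a1 b0 b1 :: "'a::field_char_0" and d::nat
  assumes v1: "v1 \<noteq> 0"
  defines "F \<equiv> pcompose [:u0,u1:] (pcompose (monom 1 d) [:v0,v1:])"
  shows "pcompose F (pcompose [:l0,l1:] (pcompose F [:b0,b1:])) = pcompose [:a0,a1:] (pcompose F F)
    \<longleftrightarrow> (\<forall>y. u0 + u1 * ((v0 + v1*l0 + v1*l1*u0) + (v1*l1*u1) * ((v0 + v1*b0 - b1*v0) + b1*y)^d)^d
          = a0 + a1*u0 + a1*u1*((v0 + v1*u0) + (v1*u1)*y^d)^d)" (is "?L = ?R" is "_ \<longleftrightarrow> (\<forall>y. ?P y)")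
proof -
  have "?L \<longleftrightarrow> (\<forall>x. poly (pcompose F (pcompose [:l0,l1:] (pcompose F [:b0,b1:]))) x
      = poly (pcompose [:a0,a1:] (pcompose F F)) x)"
    by (simp add: poly_eq_poly_eq_iff[symmetric] fun_eq_iff)
  also have "\<dots> \<longleftrightarrow> (\<forall>x. ?P (v0 + v1*x))"
    unfolding F_def eval_L[OF v1] eval_R by simp
  also have "\<dots> \<longleftrightarrow> ?R"
  proof
    assume h: "\<forall>x. ?P (v0 + v1*x)"
    show ?R
    proof
      fix y
      have "v0 + v1 * ((y - v0)/v1) = y" using v1 by (simp add: field_simps)
      then show "?P y" using h[rule_format, of "(y - v0)/v1"] by simp
    qed
  qed simp
  finally show ?thesis .
qed



theorem lemma4p2:
  fixes u v l :: "'a::field_char_0 poly" and d :: nat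
  assumes "degree u = 1" and "degree v = 1" and "degree l = 1" and "d > 1"
  defines "F \<equiv> pcompose u (pcompose (monom 1 d) v)"
  shows "infinite {(a, b). degree a = 1 \<and> degree b = 1 \<and>
            pcompose F (pcompose l (pcompose F b)) = pcompose a (pcompose F F)}
         \<longleftrightarrow>
         (\<exists>\<epsilon> \<delta>. \<epsilon> \<noteq> 0 \<and> \<delta> \<noteq> 0 \<and>
            F = pcompose (comp_inv v) (pcompose (monom \<epsilon> d) v) \<and>
            l = pcompose (comp_inv v) (pcompose (monom \<delta> 1) v))"
  (is "infinite ?S \<longleftrightarrow> ?C")
proof -
  obtain u0 u1 where u: "u = [:u0,u1:]" and u1: "u1 \<noteq> 0" using lin_rep[OF assms(1)] by blast
  obtain v0 v1 where v: "v = [:v0,v1:]" and v1: "v1 \<noteq> 0" using lin_rep[OF assms(2)] by blast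
  obtain l0 l1 where l: "l = [:l0,l1:]" and l1: "l1 \<noteq> 0" using lin_rep[OF assms(3)] by blast
  have d: "d > 1" by fact
  have F': "F = pcompose [:u0,u1:] (pcompose (monom 1 d) [:v0,v1:])" using F_def u v by simp
  define al where "al = v1*l1*u1"
  define be where "be = v0 + v1*l0 + v1*l1*u0"
  define ga where "ga = v1*u1"
  define et where "et = v0 + v1*u0"
  have alnz: "al \<noteq> 0" and ganz: "ga \<noteq> 0" using u1 v1 l1 by (simp_all add: al_def ga_def)
  have eqS: "([:a0,a1:],[:b0,b1:]) \<in> ?S \<longleftrightarrow> a1 \<noteq> 0 \<and> b1 \<noteq> 0 \<and>
     (\<forall>y. u0 + u1 * (be + al * ((v0 + v1*b0 - b1*v0) + b1*y)^d)^d
          = a0 + a1*u0 + a1*u1*(et + ga*y^d)^d)" for a0 a1 b0 b1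
    using eqchar[OF v1, of u0 u1 d v0 l0 l1 b0 b1 a0 a1] unfolding F'[symmetric] l
    by (simp add: al_def be_def ga_def et_def)
  have C_iff: "?C \<longleftrightarrow> et = 0 \<and> be = 0"
  proof
    assume ?C
    then obtain \<epsilon> \<delta> where Fe: "F = pcompose (comp_inv v) (pcompose (monom \<epsilon> d) v)"
       and le: "l = pcompose (comp_inv v) (pcompose (monom \<delta> 1) v)" by blast
    define r0 where "r0 = - v0 / v1"
    have vr: "v0 + v1 * r0 = 0" using v1 by (simp add: r0_def)
    have vr': "poly v r0 = 0" using vr by (simp add: v algebra_simps)
    have ci0: "poly (comp_inv v) 0 = r0" by (simp add: comp_inv_def v r0_def)
    have z0: "(0::'a)^d = 0" using d by simp
    have pF: "poly F r0 = u0"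
      by (simp only: F_def poly_pcompose vr') (use d in \<open>simp add: poly_monom u\<close>)
    have pR: "poly (pcompose (comp_inv v) (pcompose (monom \<epsilon> d) v)) r0 = r0"
      by (simp only: poly_pcompose vr') (simp add: poly_monom ci0 z0)
    have "u0 = r0" using Fe pF pR by simp
    then have et0: "et = 0" using vr by (simp add: et_def)
    have pR2: "poly (pcompose (comp_inv v) (pcompose (monom \<delta> 1) v)) r0 = r0"
      by (simp only: poly_pcompose vr') (simp add: poly_monom ci0)
    have "poly l r0 = r0" using le pR2 by simp
    then have "l0 + l1 * r0 = r0" by (simp add: l algebra_simps)
    moreover have "be = v0 + v1 * (l0 + l1 * u0)" by (simp add: be_def algebra_simps)
    ultimately have "be = v0 + v1 * r0" using \<open>u0 = r0\<close> by simp
    then show "et = 0 \<and> be = 0" using et0 vr by simp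
  next
    assume h: "et = 0 \<and> be = 0"
    have e1: "v0 + v1*u0 = 0" using h by (simp add: et_def)
    have "u0 = ((v0 + v1*u0) - v0)/v1" using v1 by simp
    then have u0: "u0 = - v0 / v1" using e1 by simp
    have e2: "v0 + v1*l0 + l1*(v1*u0) = 0" using h by (simp add: be_def algebra_simps)
    have "v1*u0 = - v0" using u0 v1 by simp
    then have e3: "v0 + v1*l0 - l1*v0 = 0" using e2 by simp
    have "l0 = ((v0 + v1*l0 - l1*v0) + l1*v0 - v0)/v1" using v1 by simp
    then have l0: "l0 = (l1*v0 - v0) / v1" using e3 by simp
    have "F = pcompose (comp_inv v) (pcompose (monom (u1*v1) d) v)"
      by (simp add: poly_eq_poly_eq_iff[symmetric] fun_eq_iff F' v comp_inv_def poly_pcompose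
          poly_monom u0 field_simps v1)
    moreover have "l = pcompose (comp_inv v) (pcompose (monom l1 1) v)"
      by (simp add: poly_eq_poly_eq_iff[symmetric] fun_eq_iff l v comp_inv_def poly_pcompose
          poly_monom l0 field_simps v1)
    ultimately show ?C using u1 v1 l1 by (intro exI[of _ "u1*v1"] exI[of _ l1]) simp
  qed
  have degF: "degree F = d" by (simp add: F_def degree_pcompose assms degree_monom_eq)
  have degFF: "0 < degree (pcompose F F)" using d by (simp add: degree_pcompose degF)
  have S_iff: "infinite ?S \<longleftrightarrow> et = 0 \<and> be = 0"
  proof
    assume inf: "infinite ?S"
    show "et = 0 \<and> be = 0"
    proof (rule ccontr)
      assume nc: "\<not> (et = 0 \<and> be = 0)"
      define K where "K = be*ga/(al*et)"
      define h where "h p = [:v0*(p-1)/v1, p:]" for p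
      have sol: "b1 \<noteq> 0 \<and> v0 + v1*b0 - b1*v0 = 0 \<and> be*ga = al*b1^d*et"
        if "([:a0,a1:],[:b0,b1:]) \<in> ?S" for a0 a1 b0 b1
      proof -
        have a1: "a1 \<noteq> 0" and b1: "b1 \<noteq> 0" using that eqS by blast+
        have H: "\<forall>y. u0 + u1 * (be + al * ((v0 + v1*b0 - b1*v0) + b1*y)^d)^d
          = a0 + a1*u0 + a1*u1*(et + ga*y^d)^d" using that eqS by blast
        show ?thesis using core[OF u1 a1 alnz ganz b1 d H[rule_format]] b1 by blast
      qed
      have sub: "snd ` ?S \<subseteq> h ` {p. p^d = K}"
      proof
        fix b assume "b \<in> snd ` ?S"
        then obtain a where ab: "(a,b) \<in> ?S" by force
        then have da: "degree a = 1" and db: "degree b = 1" by auto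
        obtain a0 a1 where a: "a = [:a0,a1:]" using lin_rep(1)[OF da] by blast
        obtain b0 b1 where b: "b = [:b0,b1:]" using lin_rep(1)[OF db] by blast
        have s: "b1 \<noteq> 0 \<and> v0 + v1*b0 - b1*v0 = 0 \<and> be*ga = al*b1^d*et"
          using sol[of a0 a1 b0 b1] ab a b by simp
        have etnz: "et \<noteq> 0"
        proof
          assume "et = 0"
          then have "be * ga = 0" using s by simp
          then show False using nc ganz \<open>et = 0\<close> by simp
        qed
        have "b1^d = K" using s etnz alnz by (simp add: K_def field_simps)
        moreover have "b0 = v0*(b1-1)/v1"
        proof -
          have "v1*b0 = b1*v0 - v0" using s by (simp add: algebra_simps eq_diff_eq)
          then have "v1*b0 = v0*(b1-1)" by (simp add: algebra_simps)
          then show ?thesis using v1 by (simp add: field_simps)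
        qed
        ultimately show "b \<in> h ` {p. p^d = K}" by (auto simp: b h_def)
      qed
      have "{p::'a. p^d = K} = {p. poly (monom 1 d - [:K:]) p = 0}"
        by (simp add: poly_monom)
      moreover have "monom 1 d - [:K:] \<noteq> 0"
      proof
        assume "monom 1 d - [:K:] = 0"
        then have "coeff (monom 1 d - [:K:]) d = 0" by simp
        moreover have "coeff [:K:] d = 0" using d by (cases d) auto
        ultimately show False by simp
      qed
      ultimately have "finite {p::'a. p^d = K}" using poly_roots_finite by metis
      then have fin1: "finite (snd ` ?S)" using sub finite_subset by blast
      have "inj_on snd ?S"
      proof (rule inj_onI)
        fix x y assume x: "x \<in> ?S" and y: "y \<in> ?S" and e: "snd x = snd y"
        obtain a b where xab: "x = (a,b)" by force
        obtain a' b' where yab: "y = (a',b')" by force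
        have "pcompose a (pcompose F F) = pcompose a' (pcompose F F)"
          using x y e xab yab by auto
        then have "pcompose (a - a') (pcompose F F) = 0" by (simp add: pcompose_diff)
        then have "a - a' = 0" using pcompose_eq_0 degFF by blast
        then show "x = y" using xab yab e by simp
      qed
      then have "finite ?S" using fin1 finite_imageD by blast
      then show False using inf by simp
    qed
  next
    assume h: "et = 0 \<and> be = 0"
    define A where "A p = al^d * p^(d*d) / ga^d" for p
    define g where "g p = ([:u0 - A p * u0, A p:], [:v0*(p-1)/v1, p:])" for p
    have mem: "g p \<in> ?S" if p: "p \<noteq> 0" for p
    proof -
      have Anz: "A p \<noteq> 0" using p alnz ganz by (simp add: A_def)
      have q0: "v0 + v1*(v0*(p-1)/v1) - p*v0 = 0" using v1 by (simp add: field_simps)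
      have "u0 + u1 * (be + al * ((v0 + v1*(v0*(p-1)/v1) - p*v0) + p*y)^d)^d
          = (u0 - A p * u0) + A p*u0 + A p*u1*(et + ga*y^d)^d" for y
      proof -
        have "u0 + u1 * (be + al * ((v0 + v1*(v0*(p-1)/v1) - p*v0) + p*y)^d)^d
            = u0 + u1 * (al^d * p^(d*d)) * y^(d*d)"
          using h q0 by (simp add: power_mult_distrib power_mult)
        also have "\<dots> = u0 + A p * u1 * ga^d * y^(d*d)" using ganz by (simp add: A_def)
        also have "\<dots> = (u0 - A p * u0) + A p*u0 + A p*u1*(et + ga*y^d)^d"
          using h by (simp add: power_mult_distrib power_mult algebra_simps)
        finally show ?thesis .
      qed
      then show ?thesis unfolding g_def using eqS Anz p by blast
    qed
    have "inj_on g {p. p \<noteq> 0}" by (rule inj_onI) (simp add: g_def)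
    moreover have "infinite {p::'a. p \<noteq> 0}"
    proof -
      have "{p::'a. p \<noteq> 0} = UNIV - {0}" by auto
      then show ?thesis using infinite_UNIV_char_0 by (metis finite_Diff2 finite.emptyI finite.insertI)
    qed
    ultimately have i1: "infinite (g ` {p. p \<noteq> 0})" using finite_imageD by blast
    have s1: "g ` {p. p \<noteq> 0} \<subseteq> ?S"
    proof
      fix x assume "x \<in> g ` {p. p \<noteq> 0}"
      then obtain p where "p \<noteq> 0" "x = g p" by auto
      then show "x \<in> ?S" using mem by simp
    qed
    show "infinite ?S" by (rule infinite_super[OF s1 i1])
  qed
  show ?thesis using C_iff S_iff by simp
qed

end
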